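(* Let $G$ be a Polish group with a comeagre conjugacy class $C$. Then every element $g\in C$ is conjugate in $G$ to $g^{-1}$. *)

theory Defs
  imports "HOL-Analysis.Analysis" "HOL-Algebra.Group"
begin

definition topological_group :: "('a, 'b) monoid_scheme \<Rightarrow> 'a topology \<Rightarrow> bool" where
  "topological_group G T \<longleftrightarrow> group G \<and> topspace T = carrier G
     \<and> continuous_map (prod_topology T T) T (\<lambda>(x, y). x \<otimes>\<^bsub>G\<^esub> y)
     \<and> continuous_map T T (\<lambda>x. inv\<^bsub>G\<^esub> x)"

definition polish_group :: "('a, 'b) monoid_scheme \<Rightarrow> 'a topology \<Rightarrow> bool" where
  "polish_group G T \<longleftrightarrow> topological_group G T \<and> completely_metrizable_space T \<and> separable_space T"

definition nowhere_dense_in :: "'a topology \<Rightarrow> 'a set \<Rightarrow> bool" where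
  "nowhere_dense_in T S \<longleftrightarrow> S \<subseteq> topspace T \<and> T interior_of (T closure_of S) = {}"

definition meagre_in :: "'a topology \<Rightarrow> 'a set \<Rightarrow> bool" where
  "meagre_in T S \<longleftrightarrow> (\<exists>\<F>. countable \<F> \<and> (\<forall>N\<in>\<F>. nowhere_dense_in T N) \<and> S \<subseteq> \<Union>\<F>)"

definition comeagre_in :: "'a topology \<Rightarrow> 'a set \<Rightarrow> bool" where
  "comeagre_in T S \<longleftrightarrow> S \<subseteq> topspace T \<and> meagre_in T (topspace T - S)"

definition conj_class :: "('a, 'b) monoid_scheme \<Rightarrow> 'a \<Rightarrow> 'a set" where
  "conj_class G g = {h \<otimes>\<^bsub>G\<^esub> g \<otimes>\<^bsub>G\<^esub> inv\<^bsub>G\<^esub> h | h. h \<in> carrier G}"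

end

theory Submission
  imports Defs
begin

lemma not_meagre_space:
  assumes "completely_metrizable_space X" "topspace X \<noteq> {}"
  shows "\<not> meagre_in X (topspace X)"
proof
  assume "meagre_in X (topspace X)"
  then obtain F where F: "countable F" "\<forall>N\<in>F. nowhere_dense_in X N" "topspace X \<subseteq> \<Union>F"
    unfolding meagre_in_def by blast
  have cl: "closedin X T \<and> X interior_of T = {}" if T: "T \<in> (\<lambda>N. X closure_of N) ` F" for T
  proof -
    obtain N where N: "N \<in> F" "T = X closure_of N" using T by blast
    have "X interior_of (X closure_of N) = {}" using F(2) N(1) unfolding nowhere_dense_in_def by blast
    then show ?thesis using N(2) closedin_closure_of by blast
  qed
  have cF: "countable ((\<lambda>N. X closure_of N) ` F)" using F(1) by (rule countable_image)
  have "X interior_of \<Union>((\<lambda>N. X closure_of N) ` F) = {}"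
    using Baire_category_alt[OF disjI1[OF assms(1)] cF cl] by blast
  moreover have "\<Union>((\<lambda>N. X closure_of N) ` F) = topspace X"
  proof
    show "\<Union>((\<lambda>N. X closure_of N) ` F) \<subseteq> topspace X"
    proof (intro Union_least)
      fix S assume "S \<in> (\<lambda>N. X closure_of N) ` F"
      then obtain N where "S = X closure_of N" by blast
      then show "S \<subseteq> topspace X" using closure_of_subset_topspace[of X N] by simp
    qed
    show "topspace X \<subseteq> \<Union>((\<lambda>N. X closure_of N) ` F)"
    proof
      fix x assume x: "x \<in> topspace X"
      then obtain N where N: "N \<in> F" "x \<in> N" using F(3) by blast
      have "N \<subseteq> topspace X" using F(2) N(1) unfolding nowhere_dense_in_def by blast
      then have "x \<in> X closure_of N" using N(2) closure_of_subset by blast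
      then show "x \<in> \<Union>((\<lambda>N. X closure_of N) ` F)" using N(1) by blast
    qed
  qed
  ultimately have "X interior_of topspace X = {}" by simp
  then show False using assms(2) by simp
qed

lemma meagre_union:
  assumes "meagre_in X A" "meagre_in X B" shows "meagre_in X (A \<union> B)"
proof -
  obtain F where F: "countable F" "\<forall>N\<in>F. nowhere_dense_in X N" "A \<subseteq> \<Union>F"
    using assms(1) unfolding meagre_in_def by blast
  obtain H where H: "countable H" "\<forall>N\<in>H. nowhere_dense_in X N" "B \<subseteq> \<Union>H"
    using assms(2) unfolding meagre_in_def by blast
  show ?thesis unfolding meagre_in_def
    by (rule exI[of _ "F \<union> H"]) (use F H in auto)
qed

lemma meagre_homeo:
  assumes hom: "homeomorphic_map X X f" and m: "meagre_in X A"
  shows "meagre_in X (f ` A)"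
proof -
  obtain F where F: "countable F" "\<forall>N\<in>F. nowhere_dense_in X N" "A \<subseteq> \<Union>F"
    using m unfolding meagre_in_def by blast
  have nd: "nowhere_dense_in X (f ` N)" if "N \<in> F" for N
  proof -
    have N: "N \<subseteq> topspace X" "X interior_of (X closure_of N) = {}"
      using F(2) that unfolding nowhere_dense_in_def by auto
    have "f ` N \<subseteq> topspace X"
      using N(1) hom homeomorphic_imp_surjective_map by blast
    moreover have "X interior_of (X closure_of (f ` N)) = {}"
      using N homeomorphic_map_closure_of[OF hom N(1)]
        homeomorphic_map_interior_of[OF hom closure_of_subset_topspace] by simp
    ultimately show ?thesis unfolding nowhere_dense_in_def by simp
  qed
  show ?thesis unfolding meagre_in_def
  proof (intro exI[of _ "(\<lambda>N. f ` N) ` F"] conjI)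
    show "countable ((\<lambda>N. f ` N) ` F)" using F(1) by simp
    show "\<forall>N\<in>(\<lambda>N. f ` N) ` F. nowhere_dense_in X N" using nd by blast
    have "f ` A \<subseteq> f ` \<Union>F" using F(3) by (rule image_mono)
    then show "f ` A \<subseteq> \<Union>((\<lambda>N. f ` N) ` F)" by (simp add: image_Union)
  qed
qed

lemma (in group) inv_cancel_aux:
  "x \<in> carrier G \<Longrightarrow> y \<in> carrier G \<Longrightarrow> inv x \<otimes> (x \<otimes> y) = y"
  "x \<in> carrier G \<Longrightarrow> y \<in> carrier G \<Longrightarrow> x \<otimes> (inv x \<otimes> y) = y"
  by (simp_all add: m_assoc[symmetric])
lemma (in group) t1: assumes h: "h \<in> carrier G" and k: "k \<in> carrier G" and c: "c \<in> carrier G"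
  and g: "g = h \<otimes> c \<otimes> inv h" and ck: "k \<otimes> c \<otimes> inv k = inv c"
  shows "(h \<otimes> k \<otimes> inv h) \<otimes> g \<otimes> inv (h \<otimes> k \<otimes> inv h) = inv g"
proof -
  have "(h \<otimes> k \<otimes> inv h) \<otimes> g \<otimes> inv (h \<otimes> k \<otimes> inv h) = h \<otimes> (k \<otimes> c \<otimes> inv k) \<otimes> inv h"
      using h k c g by (simp add: inv_mult_group m_assoc inv_cancel_aux)
  also have "\<dots> = inv g" using ck h c g by (simp add: inv_mult_group m_assoc inv_cancel_aux)
  finally show ?thesis .
qed
lemma (in group) t2: assumes a: "a \<in> carrier G" and b: "b \<in> carrier G" and c: "c \<in> carrier G"
  and ab: "a \<otimes> c \<otimes> inv a = inv (b \<otimes> c \<otimes> inv b)"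
  shows "(inv b \<otimes> a) \<otimes> c \<otimes> inv (inv b \<otimes> a) = inv c"
proof -
  have "inv (b \<otimes> c \<otimes> inv b) = b \<otimes> inv c \<otimes> inv b"
    using b c by (simp add: inv_mult_group m_assoc)
  hence "a \<otimes> c \<otimes> inv a = b \<otimes> inv c \<otimes> inv b" using ab by simp
  hence "inv b \<otimes> (a \<otimes> c \<otimes> inv a) \<otimes> b = inv b \<otimes> (b \<otimes> inv c \<otimes> inv b) \<otimes> b" by simp
  thus ?thesis using a b c
    by (simp add: inv_mult_group m_assoc inv_cancel_aux)
qed

theorem mainTheorem7:
  fixes G :: "('a, 'b) monoid_scheme" and T :: "'a topology" and c :: 'a
  assumes "polish_group G T"
    and "c \<in> carrier G"
    and "comeagre_in T (conj_class G c)"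
  shows "\<forall>g \<in> conj_class G c. \<exists>h \<in> carrier G. h \<otimes>\<^bsub>G\<^esub> g \<otimes>\<^bsub>G\<^esub> inv\<^bsub>G\<^esub> h = inv\<^bsub>G\<^esub> g"
proof -
  have grp: "group G" and top: "topspace T = carrier G"
    and cinv: "continuous_map T T (\<lambda>x. inv\<^bsub>G\<^esub> x)" and cm: "completely_metrizable_space T"
    using assms(1) unfolding polish_group_def topological_group_def by simp_all
  interpret group G by (rule grp)
  let ?C = "conj_class G c"
  have Csub: "?C \<subseteq> carrier G" using assms(2) by (auto simp: conj_class_def)
  have hom: "homeomorphic_map T T (\<lambda>x. inv\<^bsub>G\<^esub> x)"
    unfolding homeomorphic_map_maps
  proof (rule exI[of _ "\<lambda>x. inv\<^bsub>G\<^esub> x"])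
    have "\<forall>x\<in>topspace T. inv\<^bsub>G\<^esub> (inv\<^bsub>G\<^esub> x) = x"
    proof
      fix x assume "x \<in> topspace T"
      then have "x \<in> carrier G" by (simp only: top)
      then show "inv\<^bsub>G\<^esub> (inv\<^bsub>G\<^esub> x) = x" by (rule inv_inv)
    qed
    then show "homeomorphic_maps T T (\<lambda>x. inv\<^bsub>G\<^esub> x) (\<lambda>x. inv\<^bsub>G\<^esub> x)"
      unfolding homeomorphic_maps_def using cinv by blast
  qed
  have m1: "meagre_in T (topspace T - ?C)" using assms(3) unfolding comeagre_in_def by blast
  have eq: "(\<lambda>x. inv\<^bsub>G\<^esub> x) ` (topspace T - ?C) = topspace T - (\<lambda>x. inv\<^bsub>G\<^esub> x) ` ?C"
  proof (intro equalityI subsetI)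
    fix y assume "y \<in> (\<lambda>x. inv\<^bsub>G\<^esub> x) ` (topspace T - ?C)"
    then obtain x where x0: "x \<in> topspace T - ?C" "y = inv\<^bsub>G\<^esub> x" by (rule imageE)
    have x: "x \<in> carrier G" "x \<notin> ?C" "y = inv\<^bsub>G\<^esub> x" using x0 top by simp_all
    have "y \<in> topspace T" using x top by simp
    moreover have "y \<notin> (\<lambda>x. inv\<^bsub>G\<^esub> x) ` ?C"
    proof
      assume "y \<in> (\<lambda>x. inv\<^bsub>G\<^esub> x) ` ?C"
      then obtain z where z: "z \<in> ?C" "y = inv\<^bsub>G\<^esub> z" by blast
      then have "inv\<^bsub>G\<^esub> (inv\<^bsub>G\<^esub> x) = inv\<^bsub>G\<^esub> (inv\<^bsub>G\<^esub> z)" using x by simp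
      then have "x = z" using x z Csub by (simp add: subset_iff)
      then show False using x z by simp
    qed
    ultimately show "y \<in> topspace T - (\<lambda>x. inv\<^bsub>G\<^esub> x) ` ?C" by blast
  next
    fix y assume y: "y \<in> topspace T - (\<lambda>x. inv\<^bsub>G\<^esub> x) ` ?C"
    then have yc: "y \<in> carrier G" using top by simp
    have "inv\<^bsub>G\<^esub> y \<notin> ?C"
    proof
      assume "inv\<^bsub>G\<^esub> y \<in> ?C"
      then have "inv\<^bsub>G\<^esub> (inv\<^bsub>G\<^esub> y) \<in> (\<lambda>x. inv\<^bsub>G\<^esub> x) ` ?C" by (rule imageI)
      then show False using y yc by simp
    qed
    moreover have "inv\<^bsub>G\<^esub> y \<in> topspace T" using yc top by simp
    ultimately have "inv\<^bsub>G\<^esub> y \<in> topspace T - ?C" by blast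
    then have "inv\<^bsub>G\<^esub> (inv\<^bsub>G\<^esub> y) \<in> (\<lambda>x. inv\<^bsub>G\<^esub> x) ` (topspace T - ?C)" by (rule imageI)
    then show "y \<in> (\<lambda>x. inv\<^bsub>G\<^esub> x) ` (topspace T - ?C)" using yc by simp
  qed
  have m2: "meagre_in T (topspace T - (\<lambda>x. inv\<^bsub>G\<^esub> x) ` ?C)"
    using meagre_homeo[OF hom m1] eq by simp
  have "meagre_in T ((topspace T - ?C) \<union> (topspace T - (\<lambda>x. inv\<^bsub>G\<^esub> x) ` ?C))"
    by (rule meagre_union[OF m1 m2])
  moreover have "topspace T \<noteq> {}" using top by auto
  ultimately have "?C \<inter> (\<lambda>x. inv\<^bsub>G\<^esub> x) ` ?C \<noteq> {}"
  proof (intro notI)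
    assume m: "meagre_in T ((topspace T - ?C) \<union> (topspace T - (\<lambda>x. inv\<^bsub>G\<^esub> x) ` ?C))"
      and ne: "topspace T \<noteq> {}" and e: "?C \<inter> (\<lambda>x. inv\<^bsub>G\<^esub> x) ` ?C = {}"
    have "(topspace T - ?C) \<union> (topspace T - (\<lambda>x. inv\<^bsub>G\<^esub> x) ` ?C) = topspace T"
      using e by blast
    then show False using m not_meagre_space[OF cm ne] by simp
  qed
  then obtain x where x1: "x \<in> ?C" and x2: "x \<in> (\<lambda>x. inv\<^bsub>G\<^esub> x) ` ?C" by blast
  from x2 obtain y where y1: "y \<in> ?C" and y2: "x = inv\<^bsub>G\<^esub> y" by blast
  from x1 obtain a where a: "a \<in> carrier G" and xa: "x = a \<otimes>\<^bsub>G\<^esub> c \<otimes>\<^bsub>G\<^esub> inv\<^bsub>G\<^esub> a"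
    unfolding conj_class_def by blast
  from y1 obtain b where b: "b \<in> carrier G" and yb: "y = b \<otimes>\<^bsub>G\<^esub> c \<otimes>\<^bsub>G\<^esub> inv\<^bsub>G\<^esub> b"
    unfolding conj_class_def by blast
  have ab: "a \<otimes>\<^bsub>G\<^esub> c \<otimes>\<^bsub>G\<^esub> inv\<^bsub>G\<^esub> a = inv\<^bsub>G\<^esub> (b \<otimes>\<^bsub>G\<^esub> c \<otimes>\<^bsub>G\<^esub> inv\<^bsub>G\<^esub> b)"
    using xa y2 yb by simp
  define k where "k = inv\<^bsub>G\<^esub> b \<otimes>\<^bsub>G\<^esub> a"
  have k: "k \<in> carrier G" unfolding k_def using a b by (intro m_closed inv_closed)
  have ck: "k \<otimes>\<^bsub>G\<^esub> c \<otimes>\<^bsub>G\<^esub> inv\<^bsub>G\<^esub> k = inv\<^bsub>G\<^esub> c"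
    unfolding k_def by (rule t2[OF a b assms(2) ab])
  show ?thesis
  proof
    fix g assume "g \<in> ?C"
    then obtain h where h: "h \<in> carrier G" and g: "g = h \<otimes>\<^bsub>G\<^esub> c \<otimes>\<^bsub>G\<^esub> inv\<^bsub>G\<^esub> h"
      unfolding conj_class_def by blast
    have "h \<otimes>\<^bsub>G\<^esub> k \<otimes>\<^bsub>G\<^esub> inv\<^bsub>G\<^esub> h \<in> carrier G" using h k by (intro m_closed inv_closed)
    moreover have "(h \<otimes>\<^bsub>G\<^esub> k \<otimes>\<^bsub>G\<^esub> inv\<^bsub>G\<^esub> h) \<otimes>\<^bsub>G\<^esub> g \<otimes>\<^bsub>G\<^esub> inv\<^bsub>G\<^esub> (h \<otimes>\<^bsub>G\<^esub> k \<otimes>\<^bsub>G\<^esub> inv\<^bsub>G\<^esub> h) = inv\<^bsub>G\<^esub> g"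
      by (rule t1[OF h k assms(2) g ck])
    ultimately show "\<exists>w \<in> carrier G. w \<otimes>\<^bsub>G\<^esub> g \<otimes>\<^bsub>G\<^esub> inv\<^bsub>G\<^esub> w = inv\<^bsub>G\<^esub> g" by (rule bexI[rotated])
  qed
qed

end
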